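(* Let $R$ be a $\sigma$-(sps) Armendariz ring, where $\sigma$ is an endomorphism of $R$. Then: (1) $R$ is reversible if and only if $R[[x;\sigma]]$ is reversible; (2) $R$ is symmetric if and only if $R[[x;\sigma]]$ is symmetric.
   Context: All rings are associative with identity; $\sigma$ denotes a nonzero, non-identity ring endomorphism of $R$. The skew power series ring $R[[x;\sigma]]$ consists of all formal series $\sum_{i=0}^\infty a_i x^i$ with $a_i\in R$, added termwise and multiplied using distributivity and the rule $xa=\sigma(a)x$ for $a\in R$. A ring $R$ is $\sigma$-(sps) Armendariz if whenever $p=\sum_{i=0}^\infty a_ix^i$ and $q=\sum_{j=0}^\infty b_jx^j$ in $R[[x;\sigma]]$ satisfy $pq=0$, then $a_ib_j=0$ for all $i,j$. A ring $S$ is reversible if $ab=0$ implies $ba=0$ for all $a,b\in S$; $S$ is symmetric if $abc=0$ implies $acb=0$ for all $a,b,c\in S$. *)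

theory Defs
  imports Main
begin

text \<open>Skew power series over R: a series sum_i a_i x^i is represented by its
coefficient function nat => 'a. Addition is termwise; multiplication uses
x a = sigma(a) x, so (a_i x^i)(b_j x^j) = a_i sigma^i(b_j) x^(i+j).\<close>

type_synonym 'a sps = "nat \<Rightarrow> 'a"

definition ring_endo :: "('a::ring_1 \<Rightarrow> 'a) \<Rightarrow> bool" where
  "ring_endo \<sigma> \<longleftrightarrow> (\<forall>a b. \<sigma> (a + b) = \<sigma> a + \<sigma> b) \<and>
                   (\<forall>a b. \<sigma> (a * b) = \<sigma> a * \<sigma> b) \<and> \<sigma> 1 = 1"

definition sps_zero :: "'a::ring_1 sps" where
  "sps_zero = (\<lambda>_. 0)"

definition sps_mult :: "('a::ring_1 \<Rightarrow> 'a) \<Rightarrow> 'a sps \<Rightarrow> 'a sps \<Rightarrow> 'a sps" where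
  "sps_mult \<sigma> p q = (\<lambda>n. \<Sum>i\<le>n. p i * (\<sigma> ^^ i) (q (n - i)))"

definition sps_armendariz :: "('a::ring_1 \<Rightarrow> 'a) \<Rightarrow> bool" where
  "sps_armendariz \<sigma> \<longleftrightarrow>
     (\<forall>p q. sps_mult \<sigma> p q = sps_zero \<longrightarrow> (\<forall>i j. p i * q j = 0))"

definition reversible_ring :: "'a::ring_1 itself \<Rightarrow> bool" where
  "reversible_ring _ \<longleftrightarrow> (\<forall>a b :: 'a. a * b = 0 \<longrightarrow> b * a = 0)"

definition symmetric_ring :: "'a::ring_1 itself \<Rightarrow> bool" where
  "symmetric_ring _ \<longleftrightarrow> (\<forall>a b c :: 'a. a * b * c = 0 \<longrightarrow> a * c * b = 0)"

definition sps_reversible :: "('a::ring_1 \<Rightarrow> 'a) \<Rightarrow> bool" where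
  "sps_reversible \<sigma> \<longleftrightarrow>
     (\<forall>p q. sps_mult \<sigma> p q = sps_zero \<longrightarrow> sps_mult \<sigma> q p = sps_zero)"

definition sps_symmetric :: "('a::ring_1 \<Rightarrow> 'a) \<Rightarrow> bool" where
  "sps_symmetric \<sigma> \<longleftrightarrow>
     (\<forall>p q r. sps_mult \<sigma> (sps_mult \<sigma> p q) r = sps_zero \<longrightarrow>
              sps_mult \<sigma> (sps_mult \<sigma> p r) q = sps_zero)"

end

theory Submission
  imports Defs
begin

definition cst :: "'a::ring_1 \<Rightarrow> 'a sps" where
  "cst c = (\<lambda>n. if n = 0 then c else 0)"

lemma cst_mult: "sps_mult \<sigma> (cst a) (cst b) = cst (a * b)"
proof
  fix n
  have "sps_mult \<sigma> (cst a) (cst b) n = (\<Sum>i\<le>n. if i = 0 then a * (if n = 0 then b else 0) else 0)"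
    unfolding sps_mult_def cst_def by (intro sum.cong) auto
  also have "\<dots> = cst (a*b) n" by (simp add: cst_def)
  finally show "sps_mult \<sigma> (cst a) (cst b) n = cst (a * b) n" .
qed

lemma cst_zero: "cst c = sps_zero \<longleftrightarrow> c = 0"
  unfolding cst_def sps_zero_def by (metis)

lemma key:
  assumes arm: "sps_armendariz \<sigma>" and ab: "a * b = 0"
  shows "a * (\<sigma> ^^ n) b = 0"
proof -
  define p where "p = (\<lambda>i::nat. if i = 0 then a else if i = 1 then -a else 0)"
  define q where "q = (\<lambda>n. (\<sigma> ^^ n) b)"
  have "sps_mult \<sigma> p q = sps_zero"
  proof
    fix n
    show "sps_mult \<sigma> p q n = sps_zero n"
    proof (cases n)
      case 0 then show ?thesis using ab by (simp add: sps_mult_def p_def q_def sps_zero_def)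
    next
      case (Suc m)
      have "sps_mult \<sigma> p q n = p 0 * (\<sigma>^^0) (q (Suc m)) + (\<Sum>i\<le>m. p (Suc i) * (\<sigma> ^^ Suc i) (q (Suc m - Suc i)))"
        unfolding sps_mult_def Suc by (subst sum.atMost_Suc_shift) simp
      also have "(\<Sum>i\<le>m. p (Suc i) * (\<sigma> ^^ Suc i) (q (Suc m - Suc i))) = (\<Sum>i\<le>m. if i = 0 then - a * (\<sigma> ^^ Suc m) b else 0)"
        by (intro sum.cong) (auto simp: p_def q_def funpow_swap1)
      also have "\<dots> = - a * (\<sigma> ^^ Suc m) b" by simp
      finally show ?thesis by (simp add: p_def q_def sps_zero_def)
    qed
  qed
  then have "p 0 * q n = 0" using arm unfolding sps_armendariz_def by blast
  then show ?thesis by (simp add: p_def q_def)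
qed

lemma funpow_add_app: "(\<sigma> ^^ (i + j)) x = (\<sigma> ^^ i) ((\<sigma> ^^ j) x)"
  by (simp add: funpow_add)

theorem proposition2p5:
  fixes \<sigma> :: "'a::ring_1 \<Rightarrow> 'a"
  assumes "ring_endo \<sigma>"
    and "\<sigma> \<noteq> (\<lambda>_. 0)"
    and "\<sigma> \<noteq> id"
    and "sps_armendariz \<sigma>"
  shows "(reversible_ring TYPE('a) \<longleftrightarrow> sps_reversible \<sigma>) \<and>
         (symmetric_ring TYPE('a) \<longleftrightarrow> sps_symmetric \<sigma>)"
proof -
  note arm = assms(4)
  have armD: "\<And>p q i j. sps_mult \<sigma> p q = sps_zero \<Longrightarrow> p i * q j = 0"
    using arm unfolding sps_armendariz_def by blast
  have R1: "reversible_ring TYPE('a) \<longleftrightarrow> sps_reversible \<sigma>"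
  proof
    assume rev: "reversible_ring TYPE('a)"
    show "sps_reversible \<sigma>" unfolding sps_reversible_def
    proof (intro allI impI)
      fix p q assume pq: "sps_mult \<sigma> p q = sps_zero"
      have "\<And>i j n. q j * (\<sigma>^^n) (p i) = 0"
        using armD[OF pq] rev key[OF arm] unfolding reversible_ring_def by blast
      then show "sps_mult \<sigma> q p = sps_zero"
        unfolding sps_mult_def sps_zero_def by simp
    qed
  next
    assume rev: "sps_reversible \<sigma>"
    show "reversible_ring TYPE('a)" unfolding reversible_ring_def
    proof (intro allI impI)
      fix a b :: 'a assume "a * b = 0"
      then have "sps_mult \<sigma> (cst a) (cst b) = sps_zero" by (simp add: cst_mult cst_zero)
      then have "sps_mult \<sigma> (cst b) (cst a) = sps_zero" using rev unfolding sps_reversible_def by blast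
      then show "b * a = 0" by (simp add: cst_mult cst_zero)
    qed
  qed
  have R2: "symmetric_ring TYPE('a) \<longleftrightarrow> sps_symmetric \<sigma>"
  proof
    assume sym: "symmetric_ring TYPE('a)"
    have symD: "\<And>x y z::'a. x*y*z = 0 \<Longrightarrow> x*z*y = 0" using sym unfolding symmetric_ring_def by blast
    have revD: "\<And>x y::'a. x*y = 0 \<Longrightarrow> y*x = 0"
      using symD[of 1] by simp
    show "sps_symmetric \<sigma>" unfolding sps_symmetric_def
    proof (intro allI impI)
      fix p q r assume h: "sps_mult \<sigma> (sps_mult \<sigma> p q) r = sps_zero"
      have t1: "p i * q j * r l = 0" for i j l
      proof -
        have "r l * sps_mult \<sigma> p q k = 0" for k using armD[OF h] revD by blast
        then have "sps_mult \<sigma> (\<lambda>i. r l * p i) q = sps_zero"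
          unfolding sps_mult_def sps_zero_def
          by (auto simp: sum_distrib_left mult.assoc)
        then have "r l * p i * q j = 0" by (rule armD)
        then show ?thesis using revD by (simp add: mult.assoc)
      qed
      have t2: "p i * (\<sigma>^^i) (r j) * (\<sigma>^^(i+j)) (q l) = 0" for i j l
      proof -
        have "p i * r j * q l = 0" using symD t1 by blast
        then have "p i * r j * (\<sigma>^^(i+j)) (q l) = 0" by (rule key[OF arm])
        then have "p i * (\<sigma>^^(i+j)) (q l) * r j = 0" by (rule symD)
        then have "p i * (\<sigma>^^(i+j)) (q l) * (\<sigma>^^i) (r j) = 0" by (rule key[OF arm])
        then show ?thesis by (rule symD)
      qed
      show "sps_mult \<sigma> (sps_mult \<sigma> p r) q = sps_zero"
      proof
        fix n
        have "sps_mult \<sigma> (sps_mult \<sigma> p r) q n =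
          (\<Sum>k\<le>n. \<Sum>i\<le>k. p i * (\<sigma>^^i) (r (k - i)) * (\<sigma>^^k) (q (n - k)))"
          unfolding sps_mult_def by (simp add: sum_distrib_right)
        also have "\<dots> = 0"
        proof (intro sum.neutral ballI)
          fix k i assume "k \<in> {..n}" "i \<in> {..k}"
          then have "k = i + (k - i)" by auto
          then show "p i * (\<sigma>^^i) (r (k - i)) * (\<sigma>^^k) (q (n - k)) = 0"
            using t2[of i "k - i" "n - k"] by metis
        qed
        finally show "sps_mult \<sigma> (sps_mult \<sigma> p r) q n = sps_zero n" by (simp add: sps_zero_def)
      qed
    qed
  next
    assume sym: "sps_symmetric \<sigma>"
    show "symmetric_ring TYPE('a)" unfolding symmetric_ring_def
    proof (intro allI impI)
      fix a b c :: 'a assume "a * b * c = 0"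
      then have "sps_mult \<sigma> (sps_mult \<sigma> (cst a) (cst b)) (cst c) = sps_zero" by (simp add: cst_mult cst_zero)
      then have "sps_mult \<sigma> (sps_mult \<sigma> (cst a) (cst c)) (cst b) = sps_zero"
        using sym unfolding sps_symmetric_def by blast
      then show "a * c * b = 0" by (simp add: cst_mult cst_zero)
    qed
  qed
  show ?thesis using R1 R2 by blast
qed

end
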